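(* Let $\mathcal{O}$ be a $\Bbbk$-linear cyclic operad with multiplication and consider the associated cocyclic module with cochain complex $\mathcal{C}^*(\mathcal{O})$. Then the cyclic cochains $\mathcal{C}^n_\lambda(\mathcal{O})=\{f\in\mathcal{O}(n):\tau_nf=(-1)^nf\}$ form a subcomplex $\mathcal{C}^*_\lambda(\mathcal{O})$ of $\mathcal{C}^*(\mathcal{O})$ which is stable under the Lie bracket of degree $-1$. In particular, the cyclic cohomology $HC^*_\lambda(\mathcal{C}^*(\mathcal{O}))$ (the cohomology of $\mathcal{C}^*_\lambda(\mathcal{O})$) has naturally a structure of graded Lie algebra of degree $-1$.
   Context: $\Bbbk$ is a commutative ring. A non-symmetric operad $\mathcal{O}$ has modules $\mathcal{O}(n)$, an identity $id\in\mathcal{O}(1)$ and associative unital partial compositions $\circ_i:\mathcal{O}(m)\otimes\mathcal{O}(n)\to\mathcal{O}(m+n-1)$. It is cyclic if equipped with linear maps $\tau_n:\mathcal{O}(n)\to\mathcal{O}(n)$ with $\tau_n^{n+1}=id$, $\tau_{m+n-1}(f\circ_1g)=\tau_ng\circ_n\tau_mf$ for $m,n\ge1$, and $\tau_{m+n-1}(f\circ_ig)=\tau_mf\circ_{i-1}g$ for $m\ge2$, $n\ge0$, $2\le i\le m$. A cyclic operad with multiplication is a cyclic operad with $\mu\in\mathcal{O}(2)$, $e\in\mathcal{O}(0)$ such that $\mu\circ_1\mu=\mu\circ_2\mu$, $\mu\circ_1e=id=\mu\circ_2e$ and $\tau_2\mu=\mu$. The cochain complex $\mathcal{C}^*(\mathcal{O})$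 has $\mathcal{O}(n)$ in degree $n$ and differential $df=\mu\circ_2f+\sum_{i=1}^n(-1)^if\circ_i\mu+(-1)^{n+1}\mu\circ_1f$ (cofaces $\delta_0f=\mu\circ_2f$, $\delta_if=f\circ_i\mu$, $\delta_{n+1}f=\mu\circ_1f$, codegeneracies $\sigma_{i-1}f=f\circ_ie$, cyclic operators $\tau_n$). The Lie bracket of degree $-1$ on $\mathcal{C}^*(\mathcal{O})$ is $\{f,g\}=f\bar\circ g-(-1)^{(m-1)(n-1)}g\bar\circ f$ with $f\bar\circ g=(-1)^{(m-1)(n-1)}\sum_{i=1}^m(-1)^{(n-1)(i-1)}f\circ_ig$ for $f\in\mathcal{O}(m)$, $g\in\mathcal{O}(n)$. *)

theory Defs
  imports Main
begin

text \<open>Graded k-module encoding: all operations live in one ambient k-module of type 'a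
  (scalar multiplication sm over the commutative ring 'k); the arity-n component
  Op(n) is the submodule  Op n :: 'a set.  Partial composition  pcomp m n i f g  is
  f \<circ>_i g for f in Op(m), g in Op(n); cyclic operators  tau n  act on Op(n).\<close>

definition submodule :: "('k::comm_ring_1 \<Rightarrow> 'a::ab_group_add \<Rightarrow> 'a) \<Rightarrow> 'a set \<Rightarrow> bool" where
  "submodule sm S \<longleftrightarrow> 0 \<in> S \<and> (\<forall>x\<in>S. \<forall>y\<in>S. x + y \<in> S) \<and> (\<forall>a. \<forall>x\<in>S. sm a x \<in> S)"

definition sgnx :: "int \<Rightarrow> 'a::ab_group_add \<Rightarrow> 'a" where
  "sgnx k x = (if even k then x else - x)"

locale kmodule =
  fixes sm :: "'k::comm_ring_1 \<Rightarrow> 'a::ab_group_add \<Rightarrow> 'a"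
  assumes sm_add_right: "sm a (x + y) = sm a x + sm a y"
    and sm_add_left: "sm (a + b) x = sm a x + sm b x"
    and sm_assoc: "sm (a * b) x = sm a (sm b x)"
    and sm_one: "sm 1 x = x"

locale ns_operad = kmodule sm
  for sm :: "'k::comm_ring_1 \<Rightarrow> 'a::ab_group_add \<Rightarrow> 'a" +
  fixes Op :: "nat \<Rightarrow> 'a set"
    and pcomp :: "nat \<Rightarrow> nat \<Rightarrow> nat \<Rightarrow> 'a \<Rightarrow> 'a \<Rightarrow> 'a"
    and ident :: 'a
  assumes O_submodule: "submodule sm (Op n)"
    and comp_closed: "\<lbrakk>f \<in> Op m; g \<in> Op n; 1 \<le> i; i \<le> m\<rbrakk> \<Longrightarrow> pcomp m n i f g \<in> Op (m + n - 1)"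
    and comp_linear_left: "\<lbrakk>f \<in> Op m; f' \<in> Op m; g \<in> Op n; 1 \<le> i; i \<le> m\<rbrakk> \<Longrightarrow>
        pcomp m n i (sm a f + sm b f') g = sm a (pcomp m n i f g) + sm b (pcomp m n i f' g)"
    and comp_linear_right: "\<lbrakk>f \<in> Op m; g \<in> Op n; g' \<in> Op n; 1 \<le> i; i \<le> m\<rbrakk> \<Longrightarrow>
        pcomp m n i f (sm a g + sm b g') = sm a (pcomp m n i f g) + sm b (pcomp m n i f g')"
    and ident_in: "ident \<in> Op 1"
    and ident_left: "f \<in> Op n \<Longrightarrow> pcomp 1 n 1 ident f = f"
    and ident_right: "\<lbrakk>f \<in> Op m; 1 \<le> i; i \<le> m\<rbrakk> \<Longrightarrow> pcomp m 1 i f ident = f"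
    and assoc_seq: "\<lbrakk>f \<in> Op m; g \<in> Op n; h \<in> Op p; 1 \<le> i; i \<le> m; 1 \<le> j; j \<le> n\<rbrakk> \<Longrightarrow>
        pcomp (m + n - 1) p (i + j - 1) (pcomp m n i f g) h = pcomp m (n + p - 1) i f (pcomp n p j g h)"
    and assoc_par: "\<lbrakk>f \<in> Op m; g \<in> Op n; h \<in> Op p; 1 \<le> i; i < k; k \<le> m\<rbrakk> \<Longrightarrow>
        pcomp (m + n - 1) p (k + n - 1) (pcomp m n i f g) h = pcomp (m + p - 1) n i (pcomp m p k f h) g"

locale cyclic_operad = ns_operad sm Op pcomp ident
  for sm :: "'k::comm_ring_1 \<Rightarrow> 'a::ab_group_add \<Rightarrow> 'a"
    and Op pcomp ident +
  fixes tau :: "nat \<Rightarrow> 'a \<Rightarrow> 'a"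
  assumes tau_closed: "f \<in> Op n \<Longrightarrow> tau n f \<in> Op n"
    and tau_linear: "\<lbrakk>f \<in> Op n; g \<in> Op n\<rbrakk> \<Longrightarrow> tau n (sm a f + sm b g) = sm a (tau n f) + sm b (tau n g)"
    and tau_order: "f \<in> Op n \<Longrightarrow> (tau n ^^ (n + 1)) f = f"
    and tau_comp1: "\<lbrakk>f \<in> Op m; g \<in> Op n; 1 \<le> m; 1 \<le> n\<rbrakk> \<Longrightarrow>
        tau (m + n - 1) (pcomp m n 1 f g) = pcomp n m n (tau n g) (tau m f)"
    and tau_compi: "\<lbrakk>f \<in> Op m; g \<in> Op n; 2 \<le> m; 2 \<le> i; i \<le> m\<rbrakk> \<Longrightarrow>
        tau (m + n - 1) (pcomp m n i f g) = pcomp m n (i - 1) (tau m f) g"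

locale cyclic_operad_mult = cyclic_operad sm Op pcomp ident tau
  for sm :: "'k::comm_ring_1 \<Rightarrow> 'a::ab_group_add \<Rightarrow> 'a"
    and Op pcomp ident tau +
  fixes mu :: 'a and e :: 'a
  assumes mu_in: "mu \<in> Op 2"
    and e_in: "e \<in> Op 0"
    and mu_assoc: "pcomp 2 2 1 mu mu = pcomp 2 2 2 mu mu"
    and mu_unit1: "pcomp 2 0 1 mu e = ident"
    and mu_unit2: "pcomp 2 0 2 mu e = ident"
    and mu_cyclic: "tau 2 mu = mu"

definition cdiff :: "(nat \<Rightarrow> nat \<Rightarrow> nat \<Rightarrow> 'a \<Rightarrow> 'a \<Rightarrow> 'a) \<Rightarrow> 'a \<Rightarrow> nat \<Rightarrow> 'a \<Rightarrow> 'a::ab_group_add" where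
  "cdiff pcomp mu n f = pcomp 2 n 2 mu f
     + (\<Sum>i=1..n. sgnx (int i) (pcomp n 2 i f mu))
     + sgnx (int n + 1) (pcomp 2 n 1 mu f)"

text \<open>f \<bar>\<circ> g for f in Op(m), g in Op(n); signs use integer arithmetic so (m-1) = -1 when m = 0.\<close>
definition circ_bar :: "(nat \<Rightarrow> nat \<Rightarrow> nat \<Rightarrow> 'a \<Rightarrow> 'a \<Rightarrow> 'a) \<Rightarrow> nat \<Rightarrow> nat \<Rightarrow> 'a \<Rightarrow> 'a \<Rightarrow> 'a::ab_group_add" where
  "circ_bar pcomp m n f g = sgnx ((int m - 1) * (int n - 1))
     (\<Sum>i=1..m. sgnx ((int n - 1) * (int i - 1)) (pcomp m n i f g))"

definition bracket :: "(nat \<Rightarrow> nat \<Rightarrow> nat \<Rightarrow> 'a \<Rightarrow> 'a \<Rightarrow> 'a) \<Rightarrow> nat \<Rightarrow> nat \<Rightarrow> 'a \<Rightarrow> 'a \<Rightarrow> 'a::ab_group_add" where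
  "bracket pcomp m n f g = circ_bar pcomp m n f g
     - sgnx ((int m - 1) * (int n - 1)) (circ_bar pcomp n m g f)"

definition cyc_cochains :: "(nat \<Rightarrow> 'a set) \<Rightarrow> (nat \<Rightarrow> 'a \<Rightarrow> 'a) \<Rightarrow> nat \<Rightarrow> 'a::ab_group_add set" where
  "cyc_cochains Op tau n = {f \<in> Op n. tau n f = sgnx (int n) f}"

end

theory Submission
  imports Defs
begin


lemma sgnx_add: "sgnx k (sgnx l x) = sgnx (k + l) x"
  by (auto simp: sgnx_def)
lemma sgnx_plus: "sgnx k (x + y) = sgnx k x + sgnx k y"
  by (auto simp: sgnx_def)
lemma sgnx_minus: "sgnx k (- x) = - sgnx k x"
  by (auto simp: sgnx_def)
lemma sgnx_diff: "sgnx k (x - y) = sgnx k x - sgnx k y"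
  by (auto simp: sgnx_def)
lemma sgnx_zero[simp]: "sgnx k 0 = 0"
  by (auto simp: sgnx_def)
lemma sgnx_sum: "sgnx k (sum f A) = (\<Sum>i\<in>A. sgnx k (f i))"
  by (auto simp: sgnx_def sum_negf)
lemma sgnx_cong: "k = l \<Longrightarrow> sgnx k x = sgnx l x" by simp

lemma shiftL:
  fixes T :: "'a::ab_group_add \<Rightarrow> 'a" and x :: "nat \<Rightarrow> 'a"
  assumes Tadd: "\<And>u v. u\<in>S \<Longrightarrow> v\<in>S \<Longrightarrow> T (u+v) = T u + T v"
    and Tsg: "\<And>u k. u\<in>S \<Longrightarrow> T (sgnx k u) = sgnx k (T u)"
    and Sadd: "\<And>u v. u\<in>S \<Longrightarrow> v\<in>S \<Longrightarrow> u+v \<in> S" and Ssg: "\<And>u k. u\<in>S \<Longrightarrow> sgnx k u \<in> S"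
    and S0: "0 \<in> S"
    and xS: "\<And>i. 1\<le>i \<Longrightarrow> i\<le>m \<Longrightarrow> x i \<in> S"
    and Tx: "\<And>i. 2\<le>i \<Longrightarrow> i\<le>m \<Longrightarrow> T (x i) = sgnx a (x (i-1))"
    and m: "1 \<le> m"
  shows "T (\<Sum>i=1..m. sgnx (c*(int i - 1)+d) (x i)) = sgnx d (T (x 1))
     + sgnx (a+c) (\<Sum>i=1..m. sgnx (c*(int i - 1)+d) (x i)) - sgnx (c*(int m - 1)+a+c+d) (x m)"
proof -
  have sumS: "(\<Sum>i=1..k. sgnx (c*(int i - 1)+d) (x i)) \<in> S" if "k \<le> m" for k
    using that
  proof (induction k)
    case 0 then show ?case using S0 by simp
  next
    case (Suc k) then show ?case using Sadd Ssg xS by simp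
  qed
  have "T (\<Sum>i=1..k. sgnx (c*(int i - 1)+d) (x i)) = sgnx d (T (x 1))
     + sgnx (a+c) (\<Sum>i=1..k. sgnx (c*(int i - 1)+d) (x i)) - sgnx (c*(int k - 1)+a+c+d) (x k)"
    if "1 \<le> k" "k \<le> m" for k
    using that
  proof (induction k rule: nat_induct_at_least)
    case base
    have "T (sgnx d (x 1)) = sgnx d (T (x 1))" using Tsg xS m by simp
    moreover have "sgnx (a+c) (sgnx d (x 1)) = sgnx (a+c+d) (x 1)" by (simp add: sgnx_add add.assoc)
    ultimately show ?case by simp
  next
    case (Suc k)
    let ?S = "\<Sum>i=1..k. sgnx (c*(int i - 1)+d) (x i)"
    have e1: "(\<Sum>i=1..Suc k. sgnx (c*(int i - 1)+d) (x i)) = ?S + sgnx (c * int k + d) (x (Suc k))"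
      by simp
    have "T (?S + sgnx (c * int k + d) (x (Suc k))) = T ?S + sgnx (c * int k + d) (T (x (Suc k)))"
      using Tadd Tsg sumS xS Suc Ssg by simp
    also have "T (x (Suc k)) = sgnx a (x k)" using Tx[of "Suc k"] Suc by simp
    also have "sgnx (c * int k + d) (sgnx a (x k)) = sgnx (c*(int k - 1)+a+c+d) (x k)"
      by (simp add: sgnx_add algebra_simps)
    finally have "T (?S + sgnx (c * int k + d) (x (Suc k))) = sgnx d (T (x 1)) + sgnx (a+c) ?S" 
      using Suc by simp
    moreover have "sgnx (a+c) (?S + sgnx (c * int k + d) (x (Suc k))) = sgnx (a+c) ?S + sgnx (c*(int (Suc k) - 1)+a+c+d) (x (Suc k))"
      by (simp add: sgnx_plus sgnx_add algebra_simps)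
    ultimately show ?case unfolding e1 by simp
  qed
  then show ?thesis using m by simp
qed




context cyclic_operad_mult
begin

lemma sm_zero: "sm 0 x = 0"
  using sm_add_left[of 0 0 x] by simp
lemma sm_neg: "sm (-1) x = - x"
proof -
  have "sm 1 x + sm (-1) x = 0" using sm_add_left[of 1 "-1" x] sm_zero by simp
  then show ?thesis using sm_one by (simp add: add_eq_0_iff)
qed
lemma sm_a_zero: "sm a 0 = 0"
  using sm_add_right[of a 0 0] by simp
lemma sm_a_neg: "sm a (- x) = - sm a x"
  using sm_add_right[of a x "-x"] sm_a_zero by (simp add: add_eq_0_iff)
lemma sm_sgnx: "sm a (sgnx k x) = sgnx k (sm a x)"
  by (simp add: sgnx_def sm_a_neg)

lemma Op_zero: "0 \<in> Op n" using O_submodule unfolding submodule_def by blast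
lemma Op_add: "x\<in>Op n \<Longrightarrow> y\<in>Op n \<Longrightarrow> x+y\<in>Op n" using O_submodule unfolding submodule_def by blast
lemma Op_sm: "x\<in>Op n \<Longrightarrow> sm a x\<in>Op n" using O_submodule unfolding submodule_def by blast
lemma Op_neg: "x\<in>Op n \<Longrightarrow> -x\<in>Op n" using Op_sm[of x n "-1"] sm_neg by simp
lemma Op_diff: "x\<in>Op n \<Longrightarrow> y\<in>Op n \<Longrightarrow> x-y\<in>Op n" using Op_add Op_neg
  by (metis diff_conv_add_uminus)
lemma Op_sgnx: "x\<in>Op n \<Longrightarrow> sgnx k x\<in>Op n" by (simp add: sgnx_def Op_neg)
lemma Op_sum: "(\<And>i. i\<in>A \<Longrightarrow> f i \<in> Op n) \<Longrightarrow> sum f A \<in> Op n"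
  by (induction A rule: infinite_finite_induct) (auto simp: Op_zero Op_add)

lemma tau_add: "x\<in>Op n \<Longrightarrow> y\<in>Op n \<Longrightarrow> tau n (x+y) = tau n x + tau n y"
  using tau_linear[of x n y 1 1] by (simp add: sm_one)
lemma tau_sm: "x\<in>Op n \<Longrightarrow> tau n (sm a x) = sm a (tau n x)"
  using tau_linear[of x n x a 0] by (simp add: sm_zero)
lemma tau_neg: "x\<in>Op n \<Longrightarrow> tau n (- x) = - tau n x"
  using tau_sm[of x n "-1"] by (simp add: sm_neg)
lemma tau_zero: "tau n 0 = 0"
  using tau_add[OF Op_zero Op_zero, of n] by simp
lemma tau_diff: "x\<in>Op n \<Longrightarrow> y\<in>Op n \<Longrightarrow> tau n (x-y) = tau n x - tau n y"
  by (metis diff_conv_add_uminus tau_add tau_neg Op_neg)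
lemma tau_sgnx: "x\<in>Op n \<Longrightarrow> tau n (sgnx k x) = sgnx k (tau n x)"
  by (simp add: sgnx_def tau_neg)
lemma tau_sum: "(\<And>i. i\<in>A \<Longrightarrow> f i \<in> Op n) \<Longrightarrow> tau n (sum f A) = (\<Sum>i\<in>A. tau n (f i))"
  by (induction A rule: infinite_finite_induct) (auto simp: tau_zero tau_add Op_sum)

lemma pcomp_neg_left: "\<lbrakk>f \<in> Op m; g \<in> Op n; 1 \<le> i; i \<le> m\<rbrakk> \<Longrightarrow> pcomp m n i (- f) g = - pcomp m n i f g"
  using comp_linear_left[of f m f g n i "-1" 0] by (simp add: sm_neg sm_zero)
lemma pcomp_neg_right: "\<lbrakk>f \<in> Op m; g \<in> Op n; 1 \<le> i; i \<le> m\<rbrakk> \<Longrightarrow> pcomp m n i f (- g) = - pcomp m n i f g"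
  using comp_linear_right[of f m g n g i "-1" 0] by (simp add: sm_neg sm_zero)
lemma pcomp_sgnx_left: "\<lbrakk>f \<in> Op m; g \<in> Op n; 1 \<le> i; i \<le> m\<rbrakk> \<Longrightarrow> pcomp m n i (sgnx k f) g = sgnx k (pcomp m n i f g)"
  by (simp add: sgnx_def pcomp_neg_left)
lemma pcomp_sgnx_right: "\<lbrakk>f \<in> Op m; g \<in> Op n; 1 \<le> i; i \<le> m\<rbrakk> \<Longrightarrow> pcomp m n i f (sgnx k g) = sgnx k (pcomp m n i f g)"
  by (simp add: sgnx_def pcomp_neg_right)

lemma tau0: "x \<in> Op 0 \<Longrightarrow> tau 0 x = x"
  using tau_order[of x 0] by simp

lemma tau1: "x \<in> Op 1 \<Longrightarrow> tau 1 (tau 1 x) = x"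
  using tau_order[of x 1] by (simp add: numeral_2_eq_2)

lemma wrap:
  assumes h: "h \<in> Op p" and hc: "tau p h = sgnx (int p) h" and z: "z \<in> Op 0" and p: "2 \<le> p"
  shows "tau (p - 1) (pcomp p 0 1 h z) = pcomp p 0 p h z"
proof -
  define w where "w k = pcomp p 0 k h z" for k
  have wO: "w k \<in> Op (p - 1)" if "1 \<le> k" "k \<le> p" for k
    using comp_closed[OF h z that] unfolding w_def by simp
  have tw: "tau (p - 1) (w k) = sgnx (int p) (w (k - 1))" if "2 \<le> k" "k \<le> p" for k
    using tau_compi[OF h z p that] hc pcomp_sgnx_left[OF h z, of "k-1"] that unfolding w_def by simp
  have pw: "(tau (p - 1) ^^ k) (w p) = sgnx (int p * int k) (w (p - k))" if "k \<le> p - 1" for k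
    using that
  proof (induction k)
    case 0 then show ?case by (simp add: sgnx_def)
  next
    case (Suc k)
    have "(tau (p - 1) ^^ Suc k) (w p) = tau (p - 1) (sgnx (int p * int k) (w (p - k)))"
      using Suc by simp
    also have "\<dots> = sgnx (int p * int k) (sgnx (int p) (w (p - k - 1)))"
      using Suc tau_sgnx wO tw by simp
    also have "\<dots> = sgnx (int p * int (Suc k)) (w (p - Suc k))"
      by (simp add: sgnx_add algebra_simps)
    finally show ?case .
  qed
  have "(tau (p - 1) ^^ (p - 1)) (w p) = w 1"
    using pw[of "p - 1"] p by (simp add: sgnx_def of_nat_diff)
  moreover have "(tau (p - 1) ^^ (p - 1 + 1)) (w p) = w p"
    using tau_order[OF wO[of p]] p by simp
  ultimately show ?thesis using p unfolding w_def by (metis funpow.simps(2) o_apply Suc_eq_plus1)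
qed

end



context cyclic_operad_mult
begin

lemma cyc_sub: "submodule sm (cyc_cochains Op tau n)"
  unfolding submodule_def cyc_cochains_def
  by (auto simp: Op_zero Op_add Op_sm tau_zero tau_add tau_sm sgnx_plus sm_sgnx)

lemma diff_cyc:
  assumes "f \<in> cyc_cochains Op tau n"
  shows "cdiff pcomp mu n f \<in> cyc_cochains Op tau (Suc n)"
proof -
  have f: "f \<in> Op n" and fc: "tau n f = sgnx (int n) f" using assms by (auto simp: cyc_cochains_def)
  define A where "A = pcomp 2 n 1 mu f"
  define B where "B = pcomp 2 n 2 mu f"
  define x where "x i = pcomp n 2 i f mu" for i
  have AO: "A \<in> Op (Suc n)" using comp_closed[OF mu_in f, of 1] unfolding A_def by simp
  have BO: "B \<in> Op (Suc n)" using comp_closed[OF mu_in f, of 2] unfolding B_def by simp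
  have xO: "x i \<in> Op (Suc n)" if "1 \<le> i" "i \<le> n" for i
    using comp_closed[OF f mu_in that] unfolding x_def by simp
  have SO: "(\<Sum>i=1..n. sgnx (int i) (x i)) \<in> Op (Suc n)"
    by (rule Op_sum) (simp add: Op_sgnx xO)
  have dO: "cdiff pcomp mu n f \<in> Op (Suc n)"
    unfolding cdiff_def using AO BO SO by (simp add: A_def B_def x_def Op_add Op_sgnx)
  have tB: "tau (Suc n) B = A"
    using tau_compi[OF mu_in f, of 2] mu_cyclic unfolding A_def B_def by simp
  show ?thesis
  proof (cases "n = 0")
    case True
    have tA: "tau (Suc n) A = B" using tB tau1[of B] BO True by simp
    have "cdiff pcomp mu n f = B - A" unfolding cdiff_def A_def B_def using True
      by (simp add: sgnx_def)
    then show ?thesis using dO tA tB AO BO True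
      by (simp add: cyc_cochains_def tau_diff sgnx_def)
  next
    case False
    then have n1: "1 \<le> n" by simp
    have tA: "tau (Suc n) A = sgnx (int n) (x n)"
      using tau_comp1[OF mu_in f _ n1] mu_cyclic fc pcomp_sgnx_left[OF f mu_in n1 order_refl, of "int n"]
      unfolding A_def x_def by simp
    have tx1: "tau (Suc n) (x 1) = sgnx (int n) B"
      using tau_comp1[OF f mu_in n1] mu_cyclic fc pcomp_sgnx_right[OF mu_in f, of 2]
      unfolding B_def x_def by simp
    have txi: "tau (Suc n) (x i) = sgnx (int n) (x (i - 1))" if "2 \<le> i" "i \<le> n" for i
      using tau_compi[OF f mu_in _ that] that fc pcomp_sgnx_left[OF f mu_in, of "i-1"]
      unfolding x_def by simp
    have Seq: "(\<Sum>i=1..n. sgnx (int i) (x i)) = (\<Sum>i=1..n. sgnx (1*(int i - 1)+1) (x i))"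
      by simp
    have L: "tau (Suc n) (\<Sum>i=1..n. sgnx (1*(int i - 1)+1) (x i)) = sgnx 1 (tau (Suc n) (x 1))
     + sgnx (int n+1) (\<Sum>i=1..n. sgnx (1*(int i - 1)+1) (x i)) - sgnx (1*(int n - 1)+int n+1+1) (x n)"
      by (rule shiftL[where S="Op (Suc n)"])
         (use n1 in \<open>auto simp: tau_add tau_sgnx Op_add Op_sgnx Op_zero xO txi\<close>)
    define S where "S = (\<Sum>i=1..n. sgnx (int i) (x i))"
    have LS: "tau (Suc n) S = - sgnx (int n) B + sgnx (int n + 1) S - sgnx (2 * int n + 1) (x n)"
      using L unfolding Seq[symmetric] S_def tx1 by (simp add: sgnx_def algebra_simps)
    have deq: "cdiff pcomp mu n f = B + S + sgnx (int n + 1) A"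
      unfolding cdiff_def A_def B_def S_def x_def by simp
    have "tau (Suc n) (cdiff pcomp mu n f) = A + tau (Suc n) S + sgnx (int n + 1) (sgnx (int n) (x n))"
      unfolding deq using AO BO SO tB tA S_def by (simp add: tau_add tau_sgnx Op_add Op_sgnx)
    also have "\<dots> = sgnx (int (Suc n)) (cdiff pcomp mu n f)"
      unfolding LS deq by (cases "even n") (auto simp: sgnx_def algebra_simps)
    finally show ?thesis using dO by (simp add: cyc_cochains_def)
  qed
qed

end



context cyclic_operad_mult
begin

lemma pcomp_sgnx_both: "\<lbrakk>f \<in> Op m; g \<in> Op n; 1 \<le> i; i \<le> m\<rbrakk> \<Longrightarrow>
   pcomp m n i (sgnx k f) (sgnx l g) = sgnx (k + l) (pcomp m n i f g)"
  using pcomp_sgnx_left[of f m "sgnx l g" n i k] pcomp_sgnx_right[of f m g n i l]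
  by (simp add: Op_sgnx sgnx_add)

lemma bracket_cyc:
  assumes "f \<in> cyc_cochains Op tau m" "g \<in> cyc_cochains Op tau n"
  shows "bracket pcomp m n f g \<in> cyc_cochains Op tau (m + n - 1)"
proof -
  have f: "f \<in> Op m" and fc: "tau m f = sgnx (int m) f" using assms by (auto simp: cyc_cochains_def)
  have g: "g \<in> Op n" and gc: "tau n g = sgnx (int n) g" using assms by (auto simp: cyc_cochains_def)
  define N where "N = m + n - 1"
  define x where "x i = pcomp m n i f g" for i
  define y where "y j = pcomp n m j g f" for j
  define X where "X = (\<Sum>i=1..m. sgnx ((int n - 1)*(int i - 1) + 0) (x i))"
  define Y where "Y = (\<Sum>j=1..n. sgnx ((int m - 1)*(int j - 1) + 0) (y j))"
  define \<epsilon> where "\<epsilon> = (int m - 1)*(int n - 1)"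
  have xO: "x i \<in> Op N" if "1 \<le> i" "i \<le> m" for i
    using comp_closed[OF f g that] unfolding x_def N_def by simp
  have yO: "y j \<in> Op N" if "1 \<le> j" "j \<le> n" for j
    using comp_closed[OF g f that] unfolding y_def N_def by (simp add: add.commute)
  have XO: "X \<in> Op N" unfolding X_def by (rule Op_sum) (simp add: Op_sgnx xO)
  have YO: "Y \<in> Op N" unfolding Y_def by (rule Op_sum) (simp add: Op_sgnx yO)
  have beq: "bracket pcomp m n f g = sgnx \<epsilon> X - sgnx \<epsilon> (sgnx \<epsilon> Y)"
    unfolding bracket_def circ_bar_def X_def Y_def x_def y_def \<epsilon>_def by (simp add: mult.commute)
  have bO: "bracket pcomp m n f g \<in> Op N" unfolding beq using XO YO by (simp add: Op_diff Op_sgnx)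
  have tb: "tau N (bracket pcomp m n f g) = sgnx \<epsilon> (tau N X) - sgnx \<epsilon> (sgnx \<epsilon> (tau N Y))"
    unfolding beq using XO YO by (simp add: tau_diff tau_sgnx Op_sgnx)
  have txi: "tau N (x i) = sgnx (int m) (x (i - 1))" if "2 \<le> i" "i \<le> m" for i
    using tau_compi[OF f g _ that] that fc pcomp_sgnx_left[OF f g, of "i-1"]
    unfolding x_def N_def by simp
  have tyj: "tau N (y j) = sgnx (int n) (y (j - 1))" if "2 \<le> j" "j \<le> n" for j
    using tau_compi[OF g f _ that] that gc pcomp_sgnx_left[OF g f, of "j-1"]
    unfolding y_def N_def by (simp add: add.commute)
  have LX: "tau N X = sgnx 0 (tau N (x 1)) + sgnx (int m + (int n - 1)) X
      - sgnx ((int n - 1)*(int m - 1) + int m + (int n - 1) + 0) (x m)" if "1 \<le> m"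
    unfolding X_def
    by (rule shiftL[where S="Op N"])
       (use that in \<open>auto simp: tau_add tau_sgnx Op_add Op_sgnx Op_zero xO txi\<close>)
  have LY: "tau N Y = sgnx 0 (tau N (y 1)) + sgnx (int n + (int m - 1)) Y
      - sgnx ((int m - 1)*(int n - 1) + int n + (int m - 1) + 0) (y n)" if "1 \<le> n"
    unfolding Y_def
    by (rule shiftL[where S="Op N"])
       (use that in \<open>auto simp: tau_add tau_sgnx Op_add Op_sgnx Op_zero yO tyj\<close>)
  have goal: "tau N (bracket pcomp m n f g) = sgnx (int N) (bracket pcomp m n f g)"
  proof (cases "m + n \<le> 1")
    case True
    then have "N = 0" unfolding N_def by simp
    then show ?thesis using tau0 bO by (simp add: sgnx_def)
  next
    case False
    then have iN: "int N = int m + int n - 1" unfolding N_def by simp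
    show ?thesis
    proof (cases "m = 0")
      case True
      then have n2: "2 \<le> n" using False by simp
      have X0: "X = 0" unfolding X_def using True by simp
      have ty1: "tau N (y 1) = y n"
        using wrap[OF g gc, of f, OF _ n2] True f unfolding y_def N_def by simp
      show ?thesis unfolding tb unfolding beq iN LY[OF order_trans[OF one_le_numeral n2]] ty1 X0 using True
        by (cases "even n") (auto simp: sgnx_def algebra_simps tau_zero)
    next
      case m1: False
      show ?thesis
      proof (cases "n = 0")
        case True
        then have m2: "2 \<le> m" using False by simp
        have Y0: "Y = 0" unfolding Y_def using True by simp
        have tx1: "tau N (x 1) = x m"
          using wrap[OF f fc, of g, OF _ m2] True g unfolding x_def N_def by simp
        show ?thesis unfolding tb unfolding beq iN LX[OF order_trans[OF one_le_numeral m2]] tx1 Y0 using True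
          by (cases "even m") (auto simp: sgnx_def algebra_simps tau_zero)
      next
        case n1: False
        have m1': "1 \<le> m" and n1': "1 \<le> n" using m1 n1 by auto
        note LX = LX[OF m1'] and LY = LY[OF n1']
        have tx1: "tau N (x 1) = sgnx (int n + int m) (y n)"
          using tau_comp1[OF f g] m1 n1 fc gc pcomp_sgnx_both[OF g f, of n "int n" "int m"]
          unfolding x_def y_def N_def by (simp add: sgnx_add)
        have ty1: "tau N (y 1) = sgnx (int m + int n) (x m)"
          using tau_comp1[OF g f] m1 n1 fc gc pcomp_sgnx_both[OF f g, of m "int m" "int n"]
          unfolding x_def y_def N_def by (simp add: sgnx_add add.commute)
        show ?thesis using m1 n1 unfolding tb unfolding beq iN LX LY tx1 ty1
          by (cases "even m"; cases "even n") (auto simp: sgnx_def algebra_simps \<epsilon>_def)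
      qed
    qed
  qed
  show ?thesis using goal bO unfolding N_def cyc_cochains_def by simp
qed

end

theorem theorem5p5:
  fixes sm :: "'k::comm_ring_1 \<Rightarrow> 'a::ab_group_add \<Rightarrow> 'a"
    and Op :: "nat \<Rightarrow> 'a set"
    and pcomp :: "nat \<Rightarrow> nat \<Rightarrow> nat \<Rightarrow> 'a \<Rightarrow> 'a \<Rightarrow> 'a"
    and ident :: 'a and tau :: "nat \<Rightarrow> 'a \<Rightarrow> 'a" and mu e :: 'a
  assumes "cyclic_operad_mult sm Op pcomp ident tau mu e"
  shows "(\<forall>n. submodule sm (cyc_cochains Op tau n))
    \<and> (\<forall>n f. f \<in> cyc_cochains Op tau n \<longrightarrow> cdiff pcomp mu n f \<in> cyc_cochains Op tau (Suc n))
    \<and> (\<forall>m n f g. f \<in> cyc_cochains Op tau m \<longrightarrow> g \<in> cyc_cochains Op tau n \<longrightarrow>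
          bracket pcomp m n f g \<in> cyc_cochains Op tau (m + n - 1))"
proof -
  interpret cyclic_operad_mult sm Op pcomp ident tau mu e by (rule assms)
  show ?thesis using cyc_sub diff_cyc bracket_cyc by blast
qed

end
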